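(* Let $H$ be a real Hilbert space and $f:H\to\mathbb{R}\cup\{+\infty\}$ a semiconvex function with constant $\alpha>0$ (i.e. $f+\frac\alpha2\|\cdot\|^2$ is convex). Let $r_0>0$ and assume there is $\varphi\in\mathcal{K}(0,r_0)$ such that $\|\partial(\varphi\circ f)(x)\|_-\ge1$ for all $x\in[0<f<r_0]$. Let $\lambda\in(0,\alpha^{-1})$ and let $x\in[0<f<r_0]$ be such that $f(\operatorname{prox}_\lambda x)>0$. Then $$\|\operatorname{prox}_\lambda x-x\|\le\varphi(f(x))-\varphi(f(\operatorname{prox}_\lambda x)).$$
   Context: Semiconvex: proper, lower semicontinuous, and $f+\frac\alpha2\|\cdot\|^2$ convex. $\operatorname{prox}_\lambda(x)$ is the (unique) minimizer of $y\mapsto f(y)+\frac1{2\lambda}\|y-x\|^2$. Fréchet subdifferential: $p\in\partial f(x)$ iff $\liminf_{y\to x,y\ne x}\frac{f(y)-f(x)-\langle p,y-x\rangle}{\|y-x\|}\ge0$ (empty outside the domain); $\|C\|_-=\inf\{\|p\|:p\in C\}$, $+\infty$ if $C=\emptyset$. $\mathcal{K}(0,r_0)$: $\varphi\in C([0,r_0))\cap C^1(0,r_0)$, $\varphi(0)=0$, $\varphi'>0$ on $(0,r_0)$. $[0<f<r_0]=\{x:0<f(x)<r_0\}$. *)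

theory Defs
  imports "HOL-Analysis.Analysis"
begin

text \<open>Extended-valued functions H -> R \<union> {+\<infinity>} are modelled as 'a \<Rightarrow> ereal
  with no value equal to -\<infinity>.\<close>

definition proper_fun :: "('a \<Rightarrow> ereal) \<Rightarrow> bool" where
  "proper_fun f \<longleftrightarrow> (\<forall>x. f x \<noteq> -\<infinity>) \<and> (\<exists>x. f x \<noteq> \<infinity>)"

definition lsc_fun :: "('a::topological_space \<Rightarrow> ereal) \<Rightarrow> bool" where
  "lsc_fun f \<longleftrightarrow> (\<forall>x. f x \<le> Liminf (at x) f)"

definition ereal_convex :: "('a::real_vector \<Rightarrow> ereal) \<Rightarrow> bool" where
  "ereal_convex g \<longleftrightarrow>
     (\<forall>x y t. 0 < t \<and> t < 1 \<longrightarrow>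
        g ((1 - t) *\<^sub>R x + t *\<^sub>R y) \<le> ereal (1 - t) * g x + ereal t * g y)"

definition semiconvex :: "real \<Rightarrow> ('a::real_inner \<Rightarrow> ereal) \<Rightarrow> bool" where
  "semiconvex \<alpha> f \<longleftrightarrow> proper_fun f \<and> lsc_fun f \<and>
     ereal_convex (\<lambda>x. f x + ereal (\<alpha> / 2 * (norm x)\<^sup>2))"

definition prox :: "('a::real_inner \<Rightarrow> ereal) \<Rightarrow> real \<Rightarrow> 'a \<Rightarrow> 'a" where
  "prox f lam x = (THE y. \<forall>z. f y + ereal ((norm (y - x))\<^sup>2 / (2 * lam))
                              \<le> f z + ereal ((norm (z - x))\<^sup>2 / (2 * lam)))"

definition frechet_subdiff :: "('a::real_inner \<Rightarrow> ereal) \<Rightarrow> 'a \<Rightarrow> 'a set" where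
  "frechet_subdiff f x =
     (if \<bar>f x\<bar> = \<infinity> then {}
      else {p. Liminf (at x)
                 (\<lambda>y. (f y - f x - ereal (inner p (y - x))) / ereal (norm (y - x))) \<ge> 0})"

text \<open>\<parallel>C\<parallel>_- = inf of norms, +\<infinity> for the empty set.\<close>
definition minnorm :: "'a::real_normed_vector set \<Rightarrow> ereal" where
  "minnorm C = Inf ((\<lambda>p. ereal (norm p)) ` C)"

definition class_K :: "real \<Rightarrow> (real \<Rightarrow> real) \<Rightarrow> bool" where
  "class_K r0 \<phi> \<longleftrightarrow> continuous_on {0..<r0} \<phi> \<and> \<phi> 0 = 0 \<and>
     (\<forall>t\<in>{0<..<r0}. \<phi> differentiable (at t)) \<and>
     continuous_on {0<..<r0} (deriv \<phi>) \<and>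
     (\<forall>t\<in>{0<..<r0}. deriv \<phi> t > 0)"

text \<open>The composition \<phi> \<circ> f as an extended-valued function: \<phi> is only defined
  on [0,r0), so the composition is set to +\<infinity> where f leaves [0,r0).\<close>
definition comp_K :: "real \<Rightarrow> (real \<Rightarrow> real) \<Rightarrow> ('a \<Rightarrow> ereal) \<Rightarrow> 'a \<Rightarrow> ereal" where
  "comp_K r0 \<phi> f y = (if 0 \<le> f y \<and> f y < ereal r0 then ereal (\<phi> (real_of_ereal (f y))) else \<infinity>)"

end

theory Submission
  imports Defs "HOL-Analysis.Analysis"
begin


lemma conv_real:
  assumes "ereal_convex G" "0<t" "t<1" "G x = ereal a" "G y = ereal b"
  shows "G((1-t)*\<^sub>R x + t*\<^sub>R y) \<le> ereal((1-t)*a + t*b)"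
proof -
  have "G((1-t)*\<^sub>R x + t*\<^sub>R y) \<le> ereal(1-t)*G x + ereal t * G y"
    using assms(1-3) unfolding ereal_convex_def by blast
  then show ?thesis using assms(4,5) by simp
qed

lemma norm_comb_sq:
  fixes p z :: "'a::real_inner"
  shows "(norm ((1-t)*\<^sub>R p + t*\<^sub>R z))^2 = (1-t)*(norm p)^2 + t*(norm z)^2 - t*(1-t)*(norm (z-p))^2"
  unfolding power2_norm_eq_inner
  by (simp add: inner_add_left inner_add_right inner_diff_left inner_diff_right inner_commute algebra_simps power2_eq_square)

lemma norm_comb_sq2:
  fixes p z x :: "'a::real_inner"
  shows "(norm ((1-t)*\<^sub>R p + t*\<^sub>R z - x))^2 = (norm (p-x))^2 + 2*t*inner (p-x) (z-p) + t^2*(norm (z-p))^2"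
  unfolding power2_norm_eq_inner
  by (simp add: inner_add_left inner_add_right inner_diff_left inner_diff_right inner_commute algebra_simps power2_eq_square)

lemma norm_sq_shift:
  fixes p z x :: "'a::real_inner"
  shows "(norm (z - x))^2 = (norm (p-x))^2 + 2*inner (p-x) (z-p) + (norm (z-p))^2"
  unfolding power2_norm_eq_inner
  by (simp add: inner_add_left inner_add_right inner_diff_left inner_diff_right inner_commute algebra_simps power2_eq_square)

lemma ereal_shift_le: "ereal E \<le> a + ereal c \<Longrightarrow> ereal (E - c) \<le> a"
  by (cases a) auto

lemma conv_lower:
  fixes f :: "'a::real_inner \<Rightarrow> ereal"
  assumes conv: "ereal_convex (\<lambda>x. f x + ereal (\<alpha> / 2 * (norm x)^2))" and lsc: "lsc_fun f"
    and fin: "f x0 = ereal c0" and ninf: "\<forall>y. f y \<noteq> -\<infinity>" and al: "\<alpha> \<ge> 0"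
  shows "\<exists>A B. \<forall>y. ereal (A - B * norm y - \<alpha>/2*(norm y)^2) \<le> f y"
proof -
  define G where "G = (\<lambda>x. f x + ereal (\<alpha> / 2 * (norm x)^2))"
  have "f x0 \<le> Liminf (at x0) f" using lsc unfolding lsc_fun_def by blast
  hence "\<forall>y<f x0. eventually (\<lambda>x. y < f x) (at x0)" unfolding le_Liminf_iff .
  moreover have "ereal (c0 - 1) < f x0" using fin by simp
  ultimately have "eventually (\<lambda>y. ereal (c0 - 1) < f y) (at x0)" by blast
  then obtain \<delta> where \<delta>: "\<delta>>0" "\<And>y. y \<noteq> x0 \<Longrightarrow> dist y x0 < \<delta> \<Longrightarrow> ereal (c0-1) < f y"
    by (auto simp: eventually_at)
  define g0 where "g0 = c0 + \<alpha>/2*(norm x0)^2"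
  define K where "K = 1 + \<alpha>/2*(norm x0)^2"
  have K0: "K > 0" unfolding K_def using al by (simp add: add_pos_nonneg)
  have Gx0: "G x0 = ereal g0" unfolding G_def g0_def using fin by simp
  have near: "ereal (g0 - K) \<le> G y" if "dist y x0 < \<delta>" for y
  proof (cases "y = x0")
    case True thus ?thesis using Gx0 K0 by simp
  next
    case False
    hence "ereal (c0-1) < f y" using \<delta> that by blast
    moreover have "0 \<le> \<alpha>/2*(norm y)^2" using al by simp
    ultimately have "ereal (c0 - 1) + 0 \<le> f y + ereal (\<alpha> / 2 * (norm y)^2)"
      by (intro add_mono) auto
    thus ?thesis unfolding G_def g0_def K_def by simp
  qed
  have main: "ereal (g0 - K - 2*K/\<delta> * norm (y - x0)) \<le> G y" for y
  proof (cases "dist y x0 < \<delta>")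
    case True
    have "g0 - K - 2*K/\<delta> * norm (y - x0) \<le> g0 - K" using K0 \<delta>(1) by simp
    then show ?thesis using near[OF True] by (meson ereal_less_eq(3) order_trans)
  next
    case False
    define r where "r = norm (y - x0)"
    have r: "r \<ge> \<delta>" using False unfolding r_def by (simp add: dist_norm)
    show ?thesis
    proof (cases "G y")
      case (real gy)
      define t where "t = \<delta> / (2*r)"
      have t0: "0 < t" "t < 1" using r \<delta>(1) unfolding t_def by (auto simp: field_simps)
      define z where "z = (1-t)*\<^sub>R x0 + t*\<^sub>R y"
      have "z - x0 = t *\<^sub>R (y - x0)" unfolding z_def by (simp add: algebra_simps)
      hence "dist z x0 = t * r" unfolding r_def using t0 by (simp add: dist_norm)
      also have "\<dots> = \<delta>/2" unfolding t_def using r \<delta>(1) by (auto simp: field_simps)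
      finally have "dist z x0 < \<delta>" using \<delta>(1) by simp
      hence "ereal (g0 - K) \<le> G z" by (rule near)
      also have "G z \<le> ereal((1-t)*g0 + t*gy)" unfolding z_def
        by (rule conv_real[OF _ t0 Gx0 real]) (use conv in \<open>simp add: G_def\<close>)
      finally have "g0 - K \<le> (1-t)*g0 + t*gy" by simp
      hence "t * (g0 - K/t) \<le> t * gy" using t0 by (simp add: algebra_simps)
      hence "g0 - K/t \<le> gy" using t0 by simp
      moreover have "K/t = 2*K/\<delta> * r" unfolding t_def using r \<delta>(1) by (auto simp: field_simps)
      ultimately have "g0 - K - 2*K/\<delta> * r \<le> gy" using K0 by simp
      thus ?thesis using real unfolding r_def by simp
    next
      case PInf thus ?thesis by simp
    next
      case MInf
      have "f y \<noteq> -\<infinity>" using ninf by blast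
      thus ?thesis using MInf unfolding G_def by simp
    qed
  qed
  show ?thesis
  proof (intro exI allI)
    fix y
    have "norm (y - x0) \<le> norm y + norm x0" by (rule norm_triangle_ineq4)
    hence "2*K/\<delta> * norm (y - x0) \<le> 2*K/\<delta> * (norm y + norm x0)"
      using K0 \<delta>(1) by (intro mult_left_mono) auto
    hence "ereal (g0 - K - 2*K/\<delta> * norm x0 - 2*K/\<delta> * norm y) \<le> ereal (g0 - K - 2*K/\<delta> * norm (y - x0))"
      by (simp add: algebra_simps add_divide_distrib)
    also have "\<dots> \<le> f y + ereal (\<alpha> / 2 * (norm y)^2)" using main[of y] unfolding G_def .
    finally show "ereal (g0 - K - 2*K/\<delta> * norm x0 - 2*K/\<delta> * norm y - \<alpha>/2*(norm y)^2) \<le> f y"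
      by (rule ereal_shift_le)
  qed
qed



lemma le_by_small:
  fixes a b C :: real
  assumes "\<And>t. 0<t \<Longrightarrow> t<1 \<Longrightarrow> a \<le> b + t*C"
  shows "a \<le> b"
proof (rule ccontr)
  assume "\<not> a \<le> b"
  hence ab: "a - b > 0" by simp
  show False
  proof (cases "C \<le> 0")
    case True
    have "a \<le> b + (1/2)*C" using assms[of "1/2"] by simp
    thus False using True ab by simp
  next
    case False
    define t where "t = min (1/2) ((a-b)/(2*C))"
    have t: "0 < t" "t < 1" using ab False unfolding t_def by auto
    have "t*C \<le> ((a-b)/(2*C))*C" using False unfolding t_def by (intro mult_right_mono) auto
    also have "\<dots> = (a-b)/2" using False by simp
    finally have "t * C \<le> (a-b)/2" .
    thus False using assms[OF t] ab by simp
  qed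
qed

lemma semiconv_subgrad:
  fixes f :: "'a::real_inner \<Rightarrow> ereal"
  assumes conv: "ereal_convex (\<lambda>x. f x + ereal (\<alpha> / 2 * (norm x)^2))"
    and ninf: "\<forall>y. f y \<noteq> -\<infinity>" and mu: "\<mu> > 0"
    and minp: "\<forall>z. f p + ereal ((norm (p - x))^2/(2*\<mu>)) \<le> f z + ereal ((norm (z - x))^2/(2*\<mu>))"
    and fp: "f p = ereal c"
  shows "ereal (c + inner ((1/\<mu>) *\<^sub>R (x - p)) (z - p) - \<alpha>/2*(norm (z-p))^2) \<le> f z"
proof (cases "f z")
  case PInf thus ?thesis by simp
next
  case MInf thus ?thesis using ninf by blast
next
  case (real a)
  define D2 where "D2 = (norm (z-p))^2"
  define IP where "IP = inner (p-x) (z-p)"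
  have key: "c \<le> a + IP/\<mu> + \<alpha>/2*D2 + t*(D2/(2*\<mu>) - \<alpha>/2*D2)" if t: "0<t" "t<1" for t
  proof -
    define zt where "zt = (1-t)*\<^sub>R p + t*\<^sub>R z"
    have Gp: "f p + ereal (\<alpha> / 2 * (norm p)^2) = ereal (c + \<alpha> / 2 * (norm p)^2)" using fp by simp
    have Gz: "f z + ereal (\<alpha> / 2 * (norm z)^2) = ereal (a + \<alpha> / 2 * (norm z)^2)" using real by simp
    have "f zt + ereal (\<alpha> / 2 * (norm zt)^2) \<le> ereal ((1-t)*(c + \<alpha> / 2 * (norm p)^2) + t*(a + \<alpha> / 2 * (norm z)^2))"
      unfolding zt_def using conv_real[OF conv t Gp Gz] by simp
    hence fzt: "f zt \<le> ereal ((1-t)*(c + \<alpha> / 2 * (norm p)^2) + t*(a + \<alpha> / 2 * (norm z)^2) - \<alpha> / 2 * (norm zt)^2)"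
      by (cases "f zt") auto
    then obtain e where e: "f zt = ereal e" using ninf by (cases "f zt") auto
    have e0: "e \<le> (1-t)*(c + \<alpha> / 2 * (norm p)^2) + t*(a + \<alpha> / 2 * (norm z)^2) - \<alpha> / 2 * (norm zt)^2"
      using fzt e by simp
    have "(1-t)*(c + \<alpha> / 2 * (norm p)^2) + t*(a + \<alpha> / 2 * (norm z)^2) - \<alpha> / 2 * (norm zt)^2
       = (1-t)*c + t*a + \<alpha>/2*((1-t)*(norm p)^2 + t*(norm z)^2 - (norm zt)^2)"
      by (simp add: field_simps)
    also have "(1-t)*(norm p)^2 + t*(norm z)^2 - (norm zt)^2 = t*(1-t)*D2"
      unfolding zt_def norm_comb_sq D2_def by simp
    finally have e1: "e \<le> (1-t)*c + t*a + \<alpha>/2*(t*(1-t)*D2)" using e0 by simp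
    have "f p + ereal ((norm (p - x))^2/(2*\<mu>)) \<le> f zt + ereal ((norm (zt - x))^2/(2*\<mu>))"
      using minp by blast
    hence e2: "c + (norm (p - x))^2/(2*\<mu>) \<le> e + ((norm (p-x))^2 + 2*t*IP + t^2*D2)/(2*\<mu>)"
      using fp e unfolding zt_def norm_comb_sq2 IP_def D2_def by simp
    have "c \<le> (1-t)*c + t*a + \<alpha>/2*(t*(1-t)*D2) + (2*t*IP + t^2*D2)/(2*\<mu>)"
      using e1 e2 by (simp add: add_divide_distrib)
    hence "t*c \<le> t*(a + IP/\<mu> + \<alpha>/2*D2 + t*(D2/(2*\<mu>) - \<alpha>/2*D2))"
      using mu by (simp add: algebra_simps add_divide_distrib power2_eq_square)
    thus ?thesis using t by simp
  qed
  have "c \<le> a + IP/\<mu> + \<alpha>/2*D2" by (rule le_by_small[OF key])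
  moreover have "inner ((1/\<mu>) *\<^sub>R (x - p)) (z - p) = - IP/\<mu>"
    unfolding IP_def by (simp add: inner_diff_left)
  ultimately show ?thesis using real unfolding D2_def by simp
qed



lemma quad_lower:
  fixes c2 c1 c0 r :: real
  assumes "c2 > 0"
  shows "c0 - c1^2/(4*c2) \<le> c2*r^2 + c1*r + c0"
proof -
  have "0 \<le> (2*c2*r + c1)^2" by simp
  hence "0 \<le> 4*c2*(c2*r^2 + c1*r) + c1^2" by (simp add: power2_eq_square algebra_simps)
  hence "0 - c1^2/(4*c2) \<le> c2*r^2 + c1*r" using assms by (simp add: field_simps)
  thus ?thesis by simp
qed

lemma ereal_le_from_reals:
  fixes a :: ereal
  assumes "\<And>c. ereal c < a \<Longrightarrow> c \<le> M"
  shows "a \<le> ereal M"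
proof (rule ccontr)
  assume "\<not> a \<le> ereal M"
  hence "ereal M < a" by simp
  then obtain c where "ereal M < ereal c" "ereal c < a" using ereal_dense2 by blast
  thus False using assms by force
qed

lemma prox_exists:
  fixes f :: "'a::{real_inner,complete_space} \<Rightarrow> ereal"
  assumes conv: "ereal_convex (\<lambda>x. f x + ereal (\<alpha> / 2 * (norm x)^2))" and lsc: "lsc_fun f"
    and ninf: "\<forall>y. f y \<noteq> -\<infinity>" and fin: "f x0 = ereal c0" and al: "\<alpha> \<ge> 0"
    and mu: "0 < \<mu>" "\<mu> * \<alpha> < 1"
  shows "\<exists>p. \<forall>z. f p + ereal ((norm (p - x))^2/(2*\<mu>)) \<le> f z + ereal ((norm (z - x))^2/(2*\<mu>))"
proof -
  define \<Phi> where "\<Phi> = (\<lambda>z. f z + ereal ((norm (z - x))^2/(2*\<mu>)))"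
  obtain A B where AB: "\<And>y. ereal (A - B * norm y - \<alpha>/2*(norm y)^2) \<le> f y"
    using conv_lower[OF conv lsc fin ninf al] by blast
  define a where "a = norm x"
  define c2 where "c2 = 1/(2*\<mu>) - \<alpha>/2"
  define c1 where "c1 = - \<bar>B\<bar> - \<alpha>*a"
  define c0' where "c0' = A - \<bar>B\<bar>*a - \<alpha>/2*a^2"
  define L where "L = c0' - c1^2/(4*c2)"
  have c2: "c2 > 0" unfolding c2_def using mu by (simp add: field_simps)
  have lower: "ereal L \<le> \<Phi> z" for z
  proof -
    define r where "r = norm (z - x)"
    define n where "n = norm z"
    have nr: "n \<le> a + r" "0 \<le> n" "0 \<le> r" unfolding n_def a_def r_def
      using norm_triangle_ineq2[of z x] by auto
    have "B*n \<le> \<bar>B\<bar>*(a+r)" using nr by (meson abs_ge_self abs_ge_zero dual_order.trans mult_mono)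
    moreover have "n^2 \<le> (a+r)^2" using nr by (simp add: power_mono)
    hence "\<alpha>/2*n^2 \<le> \<alpha>/2*(a+r)^2" using al by (simp add: mult_left_mono)
    ultimately have "A - \<bar>B\<bar>*(a+r) - \<alpha>/2*(a+r)^2 + r^2/(2*\<mu>) \<le> A - B * n - \<alpha>/2*n^2 + r^2/(2*\<mu>)"
      by simp
    moreover have "A - \<bar>B\<bar>*(a+r) - \<alpha>/2*(a+r)^2 + r^2/(2*\<mu>) = c2*r^2 + c1*r + c0'"
      unfolding c2_def c1_def c0'_def by (simp add: power2_eq_square field_simps)
    moreover have "L \<le> c2*r^2 + c1*r + c0'" unfolding L_def by (rule quad_lower[OF c2])
    ultimately have "ereal L \<le> ereal (A - B * n - \<alpha>/2*n^2) + ereal (r^2/(2*\<mu>))" by simp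
    also have "\<dots> \<le> \<Phi> z" unfolding \<Phi>_def n_def r_def by (intro add_right_mono AB)
    finally show ?thesis .
  qed
  define I where "I = Inf (range \<Phi>)"
  have IL: "ereal L \<le> I" unfolding I_def using lower by (auto intro: Inf_greatest)
  have "I \<le> \<Phi> x0" unfolding I_def by (rule Inf_lower) simp
  moreover have "\<Phi> x0 < \<infinity>" unfolding \<Phi>_def using fin by simp
  ultimately obtain i where i: "I = ereal i" using IL by (cases I) auto
  have "\<exists>y. \<Phi> y < ereal (i + 1/Suc n)" for n
  proof -
    have "I < ereal (i + 1/Suc n)" using i by simp
    thus ?thesis unfolding I_def Inf_less_iff by auto
  qed
  then obtain Y where Y: "\<And>n. \<Phi> (Y n) < ereal (i + 1/Suc n)" by metis
  have IY: "I \<le> \<Phi> z" for z unfolding I_def by (rule Inf_lower) simp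
  have "\<exists>v. f (Y n) = ereal v" for n
  proof -
    have "\<Phi> (Y n) \<noteq> \<infinity>" using Y[of n] by auto
    hence "f (Y n) \<noteq> \<infinity>" unfolding \<Phi>_def by auto
    thus ?thesis using ninf by (cases "f (Y n)") auto
  qed
  then obtain fy where fy: "\<And>n. f (Y n) = ereal (fy n)" by metis
  define ph where "ph n = fy n + (norm (Y n - x))^2/(2*\<mu>)" for n
  have ph: "i \<le> ph n" "ph n < i + 1/Suc n" for n
    using IY[of "Y n"] Y[of n] fy[of n] i unfolding ph_def \<Phi>_def by auto
  define \<kappa> where "\<kappa> = (1/\<mu> - \<alpha>)/8"
  have \<kappa>: "\<kappa> > 0" unfolding \<kappa>_def using mu by (simp add: field_simps)
  have mid: "\<kappa> * (norm (Y m - Y n))^2 \<le> (ph m + ph n)/2 - i" for m n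
  proof -
    define w where "w = (1-1/2)*\<^sub>R Y m + (1/2::real)*\<^sub>R Y n"
    have Gm: "f (Y m) + ereal (\<alpha> / 2 * (norm (Y m))^2) = ereal (fy m + \<alpha> / 2 * (norm (Y m))^2)" using fy by simp
    have Gn: "f (Y n) + ereal (\<alpha> / 2 * (norm (Y n))^2) = ereal (fy n + \<alpha> / 2 * (norm (Y n))^2)" using fy by simp
    have "f w + ereal (\<alpha> / 2 * (norm w)^2) \<le> ereal ((1-1/2)*(fy m + \<alpha> / 2 * (norm (Y m))^2) + (1/2)*(fy n + \<alpha> / 2 * (norm (Y n))^2))"
      unfolding w_def by (rule conv_real[OF conv _ _ Gm Gn]) auto
    hence fw: "f w \<le> ereal ((1-1/2)*(fy m + \<alpha> / 2 * (norm (Y m))^2) + (1/2)*(fy n + \<alpha> / 2 * (norm (Y n))^2) - \<alpha> / 2 * (norm w)^2)"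
      by (cases "f w") auto
    have "ereal i \<le> f w + ereal ((norm (w - x))^2/(2*\<mu>))" using IY[of w] i unfolding \<Phi>_def by simp
    with fw have ineq: "i \<le> (1-1/2)*(fy m + \<alpha> / 2 * (norm (Y m))^2) + (1/2)*(fy n + \<alpha> / 2 * (norm (Y n))^2) - \<alpha> / 2 * (norm w)^2
        + (norm (w - x))^2/(2*\<mu>)"
      by (cases "f w") auto
    have w1: "(norm w)^2 = (1-1/2)*(norm (Y m))^2 + (1/2)*(norm (Y n))^2 - (1/2)*(1-1/2)*(norm (Y n - Y m))^2"
      unfolding w_def by (rule norm_comb_sq)
    have hx: "(1/2::real) *\<^sub>R x + (1/2::real) *\<^sub>R x = x"
      by (metis scaleR_add_left field_sum_of_halves scaleR_one)
    have "w - x = (1-1/2)*\<^sub>R (Y m - x) + (1/2::real)*\<^sub>R (Y n - x)" unfolding w_def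
      using hx by (simp add: algebra_simps)
    hence w2: "(norm (w - x))^2 = (1-1/2)*(norm (Y m - x))^2 + (1/2)*(norm (Y n - x))^2 - (1/2)*(1-1/2)*(norm (Y n - Y m))^2"
      using norm_comb_sq[of "1/2" "Y m - x" "Y n - x"] by simp
    have "norm (Y n - Y m) = norm (Y m - Y n)" by (rule norm_minus_commute)
    define D where "D = (norm (Y m - Y n))^2"
    have e1: "(1-1/2)*(fy m + \<alpha> / 2 * (norm (Y m))^2) + (1/2)*(fy n + \<alpha> / 2 * (norm (Y n))^2) - \<alpha> / 2 * (norm w)^2
        + (norm (w - x))^2/(2*\<mu>) = (fy m + fy n)/2 + \<alpha>/8*D + ((norm (Y m - x))^2/2 + (norm (Y n - x))^2/2 - D/4)/(2*\<mu>)"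
      unfolding w1 w2 D_def by (simp add: norm_minus_commute field_simps)
    have e2: "(ph m + ph n)/2 - i - \<kappa>*D = (fy m + fy n)/2 + \<alpha>/8*D + ((norm (Y m - x))^2/2 + (norm (Y n - x))^2/2 - D/4)/(2*\<mu>) - i"
      unfolding ph_def \<kappa>_def using mu(1) by (simp add: field_simps)
    show ?thesis using ineq e1 e2 unfolding D_def by linarith
  qed
  have "Cauchy Y"
  proof (rule CauchyI)
    fix e :: real assume e: "0 < e"
    obtain N where N: "1 / Suc N < \<kappa> * e^2" using \<kappa> e
      by (metis mult_pos_pos nat_approx_posE zero_less_power)
    show "\<exists>M. \<forall>m\<ge>M. \<forall>n\<ge>M. norm (Y m - Y n) < e"
    proof (intro exI allI impI)
      fix m n assume mn: "N \<le> m" "N \<le> n"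
      have "1/Suc m \<le> 1/Suc N" "1/Suc n \<le> 1/Suc N" using mn by (auto simp: frac_le)
      moreover have aux: "\<And>a b c u v. u < a \<Longrightarrow> v < b \<Longrightarrow> a \<le> c \<Longrightarrow> b \<le> c \<Longrightarrow> (u+v)/2 < (c::real)"
        by (simp add: field_simps)
      ultimately have "((ph m - i) + (ph n - i))/2 < 1/Suc N" using ph[of m] ph[of n]
        by (intro aux[of _ "1/Suc m" _ "1/Suc n"]) auto
      hence "(ph m + ph n)/2 - i < 1/Suc N" by (simp add: field_simps)
      hence "\<kappa> * (norm (Y m - Y n))^2 < \<kappa> * e^2" using mid[of m n] N by simp
      hence "(norm (Y m - Y n))^2 < e^2" using \<kappa> by simp
      thus "norm (Y m - Y n) < e" using e by (simp add: power_less_imp_less_base)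
    qed
  qed
  then obtain p where Yp: "Y \<longlonglongrightarrow> p" using Cauchy_convergent_iff convergent_def by blast
  have phi: "ph \<longlonglongrightarrow> i"
  proof (rule tendsto_sandwich[of "\<lambda>n. i" _ _ "\<lambda>n. i + 1/Suc n"])
    show "\<forall>\<^sub>F n in sequentially. i \<le> ph n" using ph by simp
    show "\<forall>\<^sub>F n in sequentially. ph n \<le> i + 1/Suc n" using ph(2) by (simp add: less_imp_le)
    show "(\<lambda>n. i) \<longlonglongrightarrow> i" by simp
    have "(\<lambda>n. 1 / real (Suc n)) \<longlonglongrightarrow> 0" using LIMSEQ_inverse_real_of_nat by (simp add: inverse_eq_divide)
    thus "(\<lambda>n. i + 1/Suc n) \<longlonglongrightarrow> i" using tendsto_add[of "\<lambda>n. i" i _ "\<lambda>n. 1 / real (Suc n)" 0] by simp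
  qed
  have nY: "(\<lambda>n. (norm (Y n - x))^2/(2*\<mu>)) \<longlonglongrightarrow> (norm (p - x))^2/(2*\<mu>)"
    using mu(1) by (intro tendsto_intros Yp) auto
  have fyl: "fy \<longlonglongrightarrow> i - (norm (p - x))^2/(2*\<mu>)"
  proof -
    have "(\<lambda>n. ph n - (norm (Y n - x))^2/(2*\<mu>)) \<longlonglongrightarrow> i - (norm (p - x))^2/(2*\<mu>)"
      by (intro tendsto_diff phi nY)
    thus ?thesis unfolding ph_def by simp
  qed
  have fpI: "f p \<le> ereal (i - (norm (p - x))^2/(2*\<mu>))"
  proof (rule ereal_le_from_reals)
    fix c assume c: "ereal c < f p"
    have "f p \<le> Liminf (at p) f" using lsc unfolding lsc_fun_def by blast
    hence "\<forall>y<f p. eventually (\<lambda>x. y < f x) (at p)" unfolding le_Liminf_iff .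
    with c have "eventually (\<lambda>y. ereal c < f y) (at p)" by blast
    then obtain \<delta> where \<delta>: "\<delta>>0" "\<And>y. y \<noteq> p \<Longrightarrow> dist y p < \<delta> \<Longrightarrow> ereal c < f y"
      by (auto simp: eventually_at)
    obtain N where N: "\<And>n. n \<ge> N \<Longrightarrow> dist (Y n) p < \<delta>" using Yp \<delta>(1)
      by (metis lim_sequentially)
    have "\<forall>n\<ge>N. c \<le> fy n"
    proof (intro allI impI)
      fix n assume "N \<le> n"
      have "ereal c < f (Y n)"
      proof (cases "Y n = p")
        case True thus ?thesis using c by simp
      next
        case False thus ?thesis using \<delta>(2) N \<open>N \<le> n\<close> by blast
      qed
      thus "c \<le> fy n" using fy by simp
    qed
    thus "c \<le> i - (norm (p - x))^2/(2*\<mu>)" using LIMSEQ_le_const[OF fyl] by blast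
  qed
  show ?thesis
  proof (intro exI allI)
    fix z
    have "f p + ereal ((norm (p - x))^2/(2*\<mu>)) \<le> ereal (i - (norm (p - x))^2/(2*\<mu>)) + ereal ((norm (p - x))^2/(2*\<mu>))"
      using fpI by (rule add_right_mono)
    also have "\<dots> = I" using i by simp
    also have "\<dots> \<le> \<Phi> z" by (rule IY)
    finally show "f p + ereal ((norm (p - x))^2/(2*\<mu>)) \<le> f z + ereal ((norm (z - x))^2/(2*\<mu>))"
      unfolding \<Phi>_def .
  qed
qed



lemma prox_char:
  fixes f :: "'a::{real_inner,complete_space} \<Rightarrow> ereal"
  assumes conv: "ereal_convex (\<lambda>x. f x + ereal (\<alpha> / 2 * (norm x)^2))" and lsc: "lsc_fun f"
    and ninf: "\<forall>y. f y \<noteq> -\<infinity>" and fin: "f x0 = ereal c0" and al: "\<alpha> \<ge> 0"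
    and mu: "0 < \<mu>" "\<mu> * \<alpha> < 1"
  shows "\<forall>z. f (prox f \<mu> x) + ereal ((norm (prox f \<mu> x - x))^2/(2*\<mu>)) \<le> f z + ereal ((norm (z - x))^2/(2*\<mu>))"
    and "\<exists>c. f (prox f \<mu> x) = ereal c"
proof -
  obtain p where p: "\<forall>z. f p + ereal ((norm (p - x))^2/(2*\<mu>)) \<le> f z + ereal ((norm (z - x))^2/(2*\<mu>))"
    using prox_exists[OF conv lsc ninf fin al mu] by blast
  have "f p + ereal ((norm (p - x))^2/(2*\<mu>)) \<le> f x0 + ereal ((norm (x0 - x))^2/(2*\<mu>))" using p by blast
  hence "f p \<noteq> \<infinity>" using fin by auto
  then obtain c where c: "f p = ereal c" using ninf by (cases "f p") auto
  have uniq: "y = p" if y: "\<forall>z. f y + ereal ((norm (y - x))^2/(2*\<mu>)) \<le> f z + ereal ((norm (z - x))^2/(2*\<mu>))" for y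
  proof -
    define D where "D = (norm (y - p))^2"
    have sg: "ereal (c + inner ((1/\<mu>) *\<^sub>R (x - p)) (y - p) - \<alpha>/2*D) \<le> f y"
      unfolding D_def by (rule semiconv_subgrad[OF conv ninf mu(1) p c])
    have eq: "inner ((1/\<mu>) *\<^sub>R (x - p)) (y - p) + (norm (y - x))^2/(2*\<mu>) = (norm (p - x))^2/(2*\<mu>) + D/(2*\<mu>)"
      unfolding norm_sq_shift[of y x p] D_def using mu(1) by (simp add: inner_diff_left field_simps)
    have "ereal (c + inner ((1/\<mu>) *\<^sub>R (x - p)) (y - p) - \<alpha>/2*D) + ereal ((norm (y - x))^2/(2*\<mu>))
          \<le> f y + ereal ((norm (y - x))^2/(2*\<mu>))" using sg by (rule add_right_mono)
    also have "\<dots> \<le> f p + ereal ((norm (p - x))^2/(2*\<mu>))" using y by blast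
    finally have "c + inner ((1/\<mu>) *\<^sub>R (x - p)) (y - p) - \<alpha>/2*D + (norm (y - x))^2/(2*\<mu>) \<le> c + (norm (p - x))^2/(2*\<mu>)"
      using c by simp
    hence "D/(2*\<mu>) - \<alpha>/2*D \<le> 0" using eq by simp
    hence "D * (1 - \<mu>*\<alpha>) \<le> 0" using mu(1) by (simp add: field_simps)
    moreover have "D \<ge> 0" unfolding D_def by simp
    ultimately have "D = 0" using mu(2) by (simp add: mult_le_0_iff)
    thus "y = p" unfolding D_def by simp
  qed
  have pe: "prox f \<mu> x = p" unfolding prox_def
    by (rule the_equality) (use p uniq in blast)+
  show "\<forall>z. f (prox f \<mu> x) + ereal ((norm (prox f \<mu> x - x))^2/(2*\<mu>)) \<le> f z + ereal ((norm (z - x))^2/(2*\<mu>))"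
    using p pe by simp
  show "\<exists>c. f (prox f \<mu> x) = ereal c" using c pe by simp
qed



lemma deriv_local:
  fixes \<phi> :: "real \<Rightarrow> real"
  assumes "(\<phi> has_real_derivative d) (at c)" "e>0"
  shows "\<exists>\<eta>>0. \<forall>s. \<bar>s-c\<bar> < \<eta> \<longrightarrow> \<bar>\<phi> s - \<phi> c - d*(s-c)\<bar> \<le> e*\<bar>s-c\<bar>"
proof -
  have "((\<lambda>y. (\<phi> y - \<phi> c) / (y - c)) \<longlongrightarrow> d) (at c)"
    using assms(1) has_field_derivative_iff by blast
  then obtain \<eta> where \<eta>: "\<eta>>0" "\<And>x. x \<noteq> c \<Longrightarrow> norm (x - c) < \<eta> \<Longrightarrow> norm ((\<phi> x - \<phi> c) / (x - c) - d) < e"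
    using assms(2) unfolding LIM_eq by blast
  show ?thesis
  proof (intro exI conjI allI impI)
    show "\<eta> > 0" by fact
    fix s assume s: "\<bar>s-c\<bar> < \<eta>"
    show "\<bar>\<phi> s - \<phi> c - d*(s-c)\<bar> \<le> e*\<bar>s-c\<bar>"
    proof (cases "s = c")
      case True thus ?thesis by simp
    next
      case False
      have "\<bar>(\<phi> s - \<phi> c) / (s - c) - d\<bar> < e" using \<eta>(2)[OF False] s by simp
      moreover have "\<phi> s - \<phi> c - d*(s-c) = ((\<phi> s - \<phi> c) / (s - c) - d) * (s - c)"
        using False by (simp add: field_simps)
      ultimately have "\<bar>\<phi> s - \<phi> c - d*(s-c)\<bar> = \<bar>(\<phi> s - \<phi> c) / (s - c) - d\<bar> * \<bar>s-c\<bar>"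
        by (simp add: abs_mult)
      also have "\<dots> \<le> e * \<bar>s-c\<bar>" using \<open>\<bar>(\<phi> s - \<phi> c) / (s - c) - d\<bar> < e\<close>
        by (intro mult_right_mono) auto
      finally show ?thesis .
    qed
  qed
qed

lemma lin4: fixes A1 A2 e m X :: real shows "A1 \<le> e/4*m \<Longrightarrow> A2 \<le> e/4*m \<Longrightarrow> 0 \<le> e*m \<Longrightarrow> -A2-A1 \<le> X \<Longrightarrow> -(e*m) \<le> X"
  by linarith

lemma subdiff_mem:
  fixes f :: "'a::real_inner \<Rightarrow> ereal"
  assumes ineq: "\<forall>z. ereal (c + inner v (z - p) - K*(norm (z-p))^2) \<le> f z"
   and K: "K \<ge> 0" and fp: "f p = ereal c" and c: "0 < c" "c < r0"
   and dphi: "(\<phi> has_real_derivative d) (at c)" and d: "d > 0"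
   and mono: "\<And>s t. c \<le> s \<Longrightarrow> s \<le> t \<Longrightarrow> t < r0 \<Longrightarrow> \<phi> s \<le> \<phi> t"
  shows "d *\<^sub>R v \<in> frechet_subdiff (comp_K r0 \<phi> f) p"
proof -
  define g where "g = comp_K r0 \<phi> f"
  have gp: "g p = ereal (\<phi> c)" unfolding g_def comp_K_def using fp c by simp
  define Q where "Q = (\<lambda>y. (g y - g p - ereal (inner (d *\<^sub>R v) (y - p))) / ereal (norm (y - p)))"
  have ev: "eventually (\<lambda>y. ereal (-\<epsilon>) \<le> Q y) (at p)" if \<epsilon>: "\<epsilon> > 0" for \<epsilon>
  proof -
    define \<epsilon>' where "\<epsilon>' = min (d/2) (\<epsilon>/(4*(norm v + K + 1)))"
    have pos: "0 < norm v + K + 1" using K by (simp add: add_nonneg_pos)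
    have e1: "\<epsilon>' > 0" unfolding \<epsilon>'_def using d \<epsilon> pos by simp
    have e2: "\<epsilon>' \<le> d/2" unfolding \<epsilon>'_def by (rule min.cobounded1)
    note \<epsilon>'0 = e1 e2
    have \<epsilon>'1: "\<epsilon>' * (norm v + K) \<le> \<epsilon>/4"
    proof -
      have "\<epsilon>' * (norm v + K) \<le> \<epsilon>/(4*(norm v + K + 1)) * (norm v + K)"
        unfolding \<epsilon>'_def using K by (intro mult_right_mono) auto
      also have "\<dots> \<le> \<epsilon>/(4*(norm v + K + 1)) * (norm v + K + 1)"
        using K \<epsilon> by (intro mult_left_mono) auto
      also have "\<dots> = \<epsilon>/4" using pos by (simp add: field_simps)
      finally show ?thesis .
    qed
    obtain \<eta> where \<eta>: "\<eta>>0" "\<And>s. \<bar>s-c\<bar> < \<eta> \<Longrightarrow> \<bar>\<phi> s - \<phi> c - d*(s-c)\<bar> \<le> \<epsilon>'*\<bar>s-c\<bar>"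
      using deriv_local[OF dphi \<epsilon>'0(1)] by blast
    define \<eta>2 where "\<eta>2 = min (\<eta>/2) ((r0-c)/2)"
    have \<eta>2: "\<eta>2 > 0" "\<eta>2 < \<eta>" "c + \<eta>2 < r0" using \<eta>(1) c unfolding \<eta>2_def min_def by (auto simp: field_simps)
    have up: "(d - \<epsilon>') * min (s-c) \<eta>2 \<le> \<phi> s - \<phi> c" if s: "c \<le> s" "s < r0" for s
    proof (cases "s - c \<le> \<eta>2")
      case True
      hence "\<bar>s-c\<bar> < \<eta>" using \<eta>2 s by simp
      hence "\<bar>\<phi> s - \<phi> c - d*(s-c)\<bar> \<le> \<epsilon>'*\<bar>s-c\<bar>" by (rule \<eta>(2))
      thus ?thesis using True s by (simp add: min_def algebra_simps abs_le_iff)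
    next
      case False
      have "\<bar>\<phi> (c+\<eta>2) - \<phi> c - d*\<eta>2\<bar> \<le> \<epsilon>'*\<eta>2" using \<eta>(2)[of "c+\<eta>2"] \<eta>2 by simp
      hence "(d - \<epsilon>')*\<eta>2 \<le> \<phi> (c+\<eta>2) - \<phi> c" by (simp add: algebra_simps abs_le_iff)
      also have "\<phi> (c+\<eta>2) \<le> \<phi> s" using mono[of "c+\<eta>2" s] False \<eta>2 s by simp
      finally show ?thesis using False by (simp add: min_def)
    qed
    have down: "(d + \<epsilon>') * (s-c) \<le> \<phi> s - \<phi> c" if s: "s < c" "c - s < \<eta>" for s
    proof -
      have "\<bar>s-c\<bar> < \<eta>" using s by simp
      hence "\<bar>\<phi> s - \<phi> c - d*(s-c)\<bar> \<le> \<epsilon>'*\<bar>s-c\<bar>" by (rule \<eta>(2))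
      thus ?thesis using s by (simp add: algebra_simps abs_le_iff)
    qed
    have pos2: "0 < (d+\<epsilon>')*K + 1" using K d \<epsilon>'0 by (simp add: add_nonneg_pos)
    define \<rho> where "\<rho> = min 1 (min (\<eta>2/(norm v + K + 1)) (\<epsilon>/(4*((d+\<epsilon>')*K + 1))))"
    have r0': "\<rho> > 0" unfolding \<rho>_def using \<eta>2 \<epsilon> pos pos2 by simp
    have r1: "\<rho> \<le> 1" unfolding \<rho>_def by simp
    have r2: "\<rho> \<le> \<eta>2/(norm v + K + 1)" unfolding \<rho>_def by simp
    have r3: "\<rho> \<le> \<epsilon>/(4*((d+\<epsilon>')*K + 1))" unfolding \<rho>_def by simp
    have "(norm v + K) * \<rho> \<le> (norm v + K + 1) * (\<eta>2/(norm v + K + 1))"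
      using K r0' r2 by (intro mult_mono) auto
    hence r4: "(norm v + K) * \<rho> \<le> \<eta>2" using pos by simp
    have "(d+\<epsilon>')*K*\<rho> \<le> ((d+\<epsilon>')*K + 1) * (\<epsilon>/(4*((d+\<epsilon>')*K + 1)))"
      using K r0' r3 d \<epsilon>'0 pos2 by (intro mult_mono) auto
    also have "\<dots> = \<epsilon>/4" using pos2 by (simp add: field_simps)
    finally have r5: "(d+\<epsilon>')*K*\<rho> \<le> \<epsilon>/4" .
    note \<rho> = r0' r1 r4 r5
    show ?thesis unfolding eventually_at
    proof (intro exI conjI ballI impI)
      show "\<rho> > 0" by fact
      fix y assume y: "y \<in> UNIV" "y \<noteq> p \<and> dist y p < \<rho>"
      define n where "n = norm (y - p)"
      have n: "0 < n" "n < \<rho>" using y unfolding n_def by (auto simp: dist_norm)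
      define q where "q = inner v (y - p) - K*n^2"
      have qa: "\<bar>q\<bar> \<le> (norm v + K) * n"
      proof -
        have "\<bar>inner v (y - p)\<bar> \<le> norm v * n" unfolding n_def by (rule Cauchy_Schwarz_ineq2)
        moreover have "K*n^2 \<le> K * n" using n \<rho> K by (simp add: power2_eq_square mult_left_mono)
        moreover have "0 \<le> K*n^2" using K by simp
        ultimately show ?thesis unfolding q_def by (simp add: algebra_simps abs_le_iff)
      qed
      have qb: "\<bar>q\<bar> \<le> \<eta>2"
      proof -
        have "(norm v + K) * n \<le> (norm v + K) * \<rho>" using n K by (intro mult_left_mono) auto
        thus ?thesis using qa \<rho> by simp
      qed
      show "ereal (-\<epsilon>) \<le> Q y"
      proof (cases "0 \<le> f y \<and> f y < ereal r0")
        case False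
        hence "g y = \<infinity>" unfolding g_def comp_K_def by simp
        thus ?thesis unfolding Q_def using gp n unfolding n_def by simp
      next
        case True
        then obtain s where s: "f y = ereal s" "0 \<le> s" "s < r0" by (cases "f y") auto
        have gy: "g y = ereal (\<phi> s)" unfolding g_def comp_K_def using s by simp
        have sq: "q \<le> s - c" using ineq[rule_format, of y] s unfolding q_def n_def by simp
        have main: "d*q - \<epsilon>'*\<bar>q\<bar> \<le> \<phi> s - \<phi> c"
        proof (cases "c \<le> s")
          case True
          have "q \<le> min (s-c) \<eta>2" using sq qb by simp
          hence "(d - \<epsilon>') * q \<le> (d - \<epsilon>') * min (s-c) \<eta>2" using \<epsilon>'0 d by (intro mult_left_mono) auto
          also have "\<dots> \<le> \<phi> s - \<phi> c" using up[OF True s(3)] .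
          finally have h: "(d - \<epsilon>') * q \<le> \<phi> s - \<phi> c" .
          have "\<epsilon>'*q \<le> \<epsilon>'*\<bar>q\<bar>" using \<epsilon>'0 by (intro mult_left_mono) auto
          moreover have "(d - \<epsilon>') * q = d*q - \<epsilon>'*q" by (simp add: algebra_simps)
          ultimately show ?thesis using h by linarith
        next
          case False
          have "c - s < \<eta>" using sq qb \<eta>2 by simp
          hence "(d + \<epsilon>') * (s-c) \<le> \<phi> s - \<phi> c" using down False by simp
          moreover have "(d + \<epsilon>') * q \<le> (d + \<epsilon>') * (s-c)" using sq \<epsilon>'0 d by (intro mult_left_mono) auto
          ultimately have h: "(d + \<epsilon>') * q \<le> \<phi> s - \<phi> c" by linarith
          have "\<epsilon>'*(-q) \<le> \<epsilon>'*\<bar>q\<bar>" using \<epsilon>'0 by (intro mult_left_mono) auto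
          moreover have "(d + \<epsilon>') * q = d*q + \<epsilon>'*q" by (simp add: algebra_simps)
          ultimately show ?thesis using h by simp
        qed
        have "\<phi> s - \<phi> c - inner (d *\<^sub>R v) (y - p) \<ge> -(d*K*n^2) - \<epsilon>'*\<bar>q\<bar>"
          using main unfolding q_def by (simp add: algebra_simps)
        moreover have "\<epsilon>'*\<bar>q\<bar> \<le> \<epsilon>' * ((norm v + K) * n)" using qa \<epsilon>'0 by (intro mult_left_mono) auto
        moreover have "\<epsilon>' * ((norm v + K) * n) \<le> \<epsilon>/4 * n"
        proof -
          have "(\<epsilon>' * (norm v + K)) * n \<le> (\<epsilon>/4) * n" using \<epsilon>'1 n by (intro mult_right_mono) auto
          thus ?thesis by (simp add: mult.assoc)
        qed
        moreover have "d*K*n^2 \<le> \<epsilon>/4 * n"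
        proof -
          have "d*K*n^2 = (d*K*n)*n" by (simp add: power2_eq_square)
          also have "d*K*n \<le> (d+\<epsilon>')*K*\<rho>" using n d K \<epsilon>'0 by (intro mult_mono) auto
          hence "(d*K*n)*n \<le> (\<epsilon>/4) * n" using \<rho> n by (intro mult_right_mono) auto
          finally show ?thesis .
        qed
        ultimately have A: "-(d*K*n^2) - \<epsilon>'*\<bar>q\<bar> \<le> \<phi> s - \<phi> c - inner (d *\<^sub>R v) (y - p)"
            "\<epsilon>'*\<bar>q\<bar> \<le> (\<epsilon>/4) * n" "d*K*n^2 \<le> (\<epsilon>/4) * n" by auto
        have "0 \<le> \<epsilon> * n" using n \<epsilon> by simp
        hence "-(\<epsilon> * n) \<le> \<phi> s - \<phi> c - inner (d *\<^sub>R v) (y - p)"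
          by (rule lin4[OF A(2,3) _ A(1)])
        hence "-\<epsilon> * n \<le> \<phi> s - \<phi> c - inner (d *\<^sub>R v) (y - p)" by simp
        hence "-\<epsilon> \<le> (\<phi> s - \<phi> c - inner (d *\<^sub>R v) (y - p)) / n" using n by (simp add: field_simps)
        thus ?thesis unfolding Q_def gy gp n_def[symmetric] using n by simp
      qed
    qed
  qed
  have "0 \<le> Liminf (at p) Q" unfolding le_Liminf_iff
  proof (intro allI impI)
    fix e :: ereal assume "e < 0"
    then obtain z where z: "e < ereal z" "ereal z < 0" using ereal_dense2 by blast
    have "eventually (\<lambda>y. ereal z \<le> Q y) (at p)" using ev[of "-z"] z by simp
    thus "eventually (\<lambda>y. e < Q y) (at p)" by eventually_elim (use z in auto)
  qed
  thus ?thesis unfolding frechet_subdiff_def g_def[symmetric] using gp unfolding Q_def by simp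
qed



lemma chain_mono:
  fixes D :: "real \<Rightarrow> real"
  assumes a: "a0 < a1" and \<delta>: "\<delta> > 0"
    and st: "\<And>\<mu> \<nu>. a0 \<le> \<mu> \<Longrightarrow> \<mu> < \<nu> \<Longrightarrow> \<nu> \<le> a1 \<Longrightarrow> \<nu> - \<mu> < \<delta> \<Longrightarrow> D \<nu> \<le> D \<mu> + e*(\<nu>-\<mu>)"
  shows "D a1 \<le> D a0 + e*(a1-a0)"
proof -
  obtain n :: nat where n: "(a1-a0)/\<delta> < real n" using reals_Archimedean2 by blast
  have n0: "0 < real n" using n a \<delta> by (smt (verit) divide_pos_pos)
  define h where "h = (a1-a0)/n"
  have h: "0 < h" "h < \<delta>" using a n0 n \<delta> unfolding h_def by (auto simp: field_simps)
  have hn: "real n * h = a1 - a0" unfolding h_def using n0 by simp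
  have "k \<le> n \<Longrightarrow> D (a0 + real k * h) \<le> D a0 + e*(real k * h)" for k
  proof (induction k)
    case 0 thus ?case by simp
  next
    case (Suc k)
    hence IH: "D (a0 + real k * h) \<le> D a0 + e*(real k * h)" by simp
    have "real (Suc k) * h \<le> real n * h" using Suc.prems h by (intro mult_right_mono) auto
    hence le: "a0 + real (Suc k) * h \<le> a1" using hn by simp
    have "D (a0 + real (Suc k) * h) \<le> D (a0 + real k * h) + e*((a0 + real (Suc k) * h) - (a0 + real k * h))"
      by (rule st) (use h le in \<open>auto simp: algebra_simps\<close>)
    also have "(a0 + real (Suc k) * h) - (a0 + real k * h) = h" by (simp add: algebra_simps)
    finally show ?case using IH by (simp add: algebra_simps)
  qed
  from this[of n] show ?thesis using hn by simp
qed

lemma descent: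
  fixes F b s \<phi> d\<phi> :: "real \<Rightarrow> real"
  assumes a: "a0 < a1"
   and Fr: "\<And>\<mu>. a0 \<le> \<mu> \<Longrightarrow> \<mu> \<le> a1 \<Longrightarrow> c1 \<le> F \<mu> \<and> F \<mu> \<le> c2"
   and dphi: "\<And>t. c1 \<le> t \<Longrightarrow> t \<le> c2 \<Longrightarrow> (\<phi> has_real_derivative d\<phi> t) (at t)"
   and cont: "continuous_on {c1..c2} d\<phi>"
   and pos: "\<And>t. c1 \<le> t \<Longrightarrow> t \<le> c2 \<Longrightarrow> d\<phi> t > 0"
   and sd: "\<And>\<nu>. a0 \<le> \<nu> \<Longrightarrow> \<nu> \<le> a1 \<Longrightarrow> 1 \<le> d\<phi> (F \<nu>) * s \<nu> \<and> 0 \<le> s \<nu> \<and> s \<nu> \<le> S"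
   and step: "\<And>\<mu> \<nu>. a0 \<le> \<mu> \<Longrightarrow> \<mu> < \<nu> \<Longrightarrow> \<nu> \<le> a1 \<Longrightarrow>
        s \<nu> * (b \<nu> - b \<mu>) - C*(\<nu>-\<mu>)^2 \<le> F \<mu> - F \<nu> \<and> 0 \<le> b \<nu> - b \<mu> \<and> b \<nu> - b \<mu> \<le> L*(\<nu>-\<mu>)
        \<and> 0 \<le> F \<mu> - F \<nu> \<and> F \<mu> - F \<nu> \<le> M*(\<nu>-\<mu>)"
   and cst: "C \<ge> 0" "L \<ge> 0" "M \<ge> 0" "S \<ge> 0"
  shows "\<phi> (F a1) + b a1 \<le> \<phi> (F a0) + b a0"
proof -
  define D where "D = (\<lambda>\<mu>. \<phi> (F \<mu>) + b \<mu>)"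
  have ne: "{c1..c2} \<noteq> {}" using Fr[of a0] a by auto
  obtain tM where tM: "tM \<in> {c1..c2}" "\<And>y. y \<in> {c1..c2} \<Longrightarrow> d\<phi> y \<le> d\<phi> tM"
    using continuous_attains_sup[OF compact_Icc ne cont] by blast
  obtain tm where tm: "tm \<in> {c1..c2}" "\<And>y. y \<in> {c1..c2} \<Longrightarrow> d\<phi> tm \<le> d\<phi> y"
    using continuous_attains_inf[OF compact_Icc ne cont] by blast
  define M\<phi> where "M\<phi> = d\<phi> tM"
  define m where "m = d\<phi> tm"
  have m0: "m > 0" unfolding m_def using pos tm(1) by auto
  have Mphi: "\<And>t. c1 \<le> t \<Longrightarrow> t \<le> c2 \<Longrightarrow> m \<le> d\<phi> t \<and> d\<phi> t \<le> M\<phi>"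
    unfolding m_def M\<phi>_def using tm tM by auto
  have M\<phi>0: "M\<phi> > 0" using Mphi[of c1] m0 ne by fastforce
  have uc: "uniformly_continuous_on {c1..c2} d\<phi>" by (rule compact_uniformly_continuous[OF cont compact_Icc])
  have loc: "D a1 \<le> D a0 + \<epsilon>*(a1-a0)" if \<epsilon>: "\<epsilon> > 0" for \<epsilon>
  proof -
    define \<epsilon>1 where "\<epsilon>1 = min m (\<epsilon>/(2*(S*L+1)))"
    have SL: "0 < S*L+1" using cst by (simp add: add_nonneg_pos)
    have e1: "0 < \<epsilon>1" "\<epsilon>1 \<le> m" unfolding \<epsilon>1_def using m0 \<epsilon> SL by auto
    have e2: "\<epsilon>1 * (S*L) \<le> \<epsilon>/2"
    proof -
      have "\<epsilon>1 * (S*L) \<le> (\<epsilon>/(2*(S*L+1))) * (S*L+1)" unfolding \<epsilon>1_def using cst SL \<epsilon>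
        by (intro mult_mono) auto
      also have "\<dots> = \<epsilon>/2" using SL by (simp add: field_simps)
      finally show ?thesis .
    qed
    obtain \<delta>1 where \<delta>1: "\<delta>1 > 0" "\<And>x x'. x \<in> {c1..c2} \<Longrightarrow> x' \<in> {c1..c2} \<Longrightarrow> dist x' x < \<delta>1 \<Longrightarrow> dist (d\<phi> x') (d\<phi> x) < \<epsilon>1"
      using uc e1(1) unfolding uniformly_continuous_on_def by metis
    have MC: "0 < M\<phi>*C+1" using cst M\<phi>0 by (simp add: add_nonneg_pos)
    define \<delta> where "\<delta> = min (\<delta>1/(M+1)) (\<epsilon>/(2*(M\<phi>*C+1)))"
    have \<delta>: "\<delta> > 0" unfolding \<delta>_def using \<delta>1 \<epsilon> cst MC by auto
    have \<delta>a: "M * \<delta> < \<delta>1"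
    proof -
      have "M * \<delta> \<le> M * (\<delta>1/(M+1))" unfolding \<delta>_def using cst by (intro mult_left_mono) auto
      also have "\<dots> < \<delta>1" using \<delta>1 cst by (simp add: field_simps)
      finally show ?thesis .
    qed
    have \<delta>b: "M\<phi>*C*\<delta> \<le> \<epsilon>/2"
    proof -
      have "M\<phi>*C*\<delta> \<le> (M\<phi>*C+1) * (\<epsilon>/(2*(M\<phi>*C+1)))" unfolding \<delta>_def using cst M\<phi>0 \<epsilon> MC \<delta>1 \<delta>
        by (intro mult_mono) auto
      also have "\<dots> = \<epsilon>/2" using MC by (simp add: field_simps)
      finally show ?thesis .
    qed
    show ?thesis
    proof (rule chain_mono[OF a \<delta>])
      fix \<mu> \<nu> assume mn: "a0 \<le> \<mu>" "\<mu> < \<nu>" "\<nu> \<le> a1" "\<nu> - \<mu> < \<delta>"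
      define h where "h = \<nu> - \<mu>"
      have h0: "0 < h" "h < \<delta>" using mn unfolding h_def by auto
      note st = step[OF mn(1-3), folded h_def]
      note sdv = sd[of \<nu>]
      have Fm: "c1 \<le> F \<mu> \<and> F \<mu> \<le> c2" using Fr mn by auto
      have Fn: "c1 \<le> F \<nu> \<and> F \<nu> \<le> c2" using Fr mn by auto
      have sdn: "1 \<le> d\<phi> (F \<nu>) * s \<nu>" "0 \<le> s \<nu>" "s \<nu> \<le> S" using sd mn by auto
      have Mh: "M*h < \<delta>1"
      proof -
        have "M*h \<le> M*\<delta>" using h0 cst by (intro mult_left_mono) auto
        thus ?thesis using \<delta>a by simp
      qed
      have phi_lb: "(F \<mu> - F \<nu>) * (d\<phi> (F \<nu>) - \<epsilon>1) \<le> \<phi> (F \<mu>) - \<phi> (F \<nu>)"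
      proof (cases "F \<nu> < F \<mu>")
        case False thus ?thesis using st by simp
      next
        case True
        obtain z where z: "F \<nu> < z" "z < F \<mu>" "\<phi> (F \<mu>) - \<phi> (F \<nu>) = (F \<mu> - F \<nu>) * d\<phi> z"
          using MVT2[OF True, of \<phi> d\<phi>] dphi Fm Fn by force
        have "dist z (F \<nu>) < \<delta>1"
        proof -
          have "dist z (F \<nu>) \<le> F \<mu> - F \<nu>" using z by (simp add: dist_real_def)
          also have "\<dots> \<le> M*h" using st by simp
          finally show ?thesis using Mh by simp
        qed
        hence "dist (d\<phi> z) (d\<phi> (F \<nu>)) < \<epsilon>1" using \<delta>1(2)[of "F \<nu>" z] z Fm Fn by auto
        hence "d\<phi> (F \<nu>) - \<epsilon>1 \<le> d\<phi> z" by (simp add: dist_real_def abs_less_iff)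
        hence "(F \<mu> - F \<nu>) * (d\<phi> (F \<nu>) - \<epsilon>1) \<le> (F \<mu> - F \<nu>) * d\<phi> z"
          using True by (intro mult_left_mono) auto
        thus ?thesis using z by simp
      qed
      define db where "db = b \<nu> - b \<mu>"
      have db: "0 \<le> db" "db \<le> L*h" "s \<nu> * db - C*h^2 \<le> F \<mu> - F \<nu>" using st unfolding db_def by auto
      have dpos: "0 \<le> d\<phi> (F \<nu>) - \<epsilon>1" using Mphi Fn e1 by force
      have "(s \<nu> * db - C*h^2) * (d\<phi> (F \<nu>) - \<epsilon>1) \<le> (F \<mu> - F \<nu>) * (d\<phi> (F \<nu>) - \<epsilon>1)"
        using db(3) dpos by (intro mult_right_mono) auto
      also note phi_lb
      finally have A: "(s \<nu> * db - C*h^2) * (d\<phi> (F \<nu>) - \<epsilon>1) \<le> \<phi> (F \<mu>) - \<phi> (F \<nu>)" .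
      have eq: "(s \<nu> * db - C*h^2) * (d\<phi> (F \<nu>) - \<epsilon>1)
          = (d\<phi> (F \<nu>) * s \<nu>) * db - \<epsilon>1 * (s \<nu> * db) - (d\<phi> (F \<nu>) - \<epsilon>1) * (C*h^2)"
        by (simp add: algebra_simps)
      have B1: "db \<le> (d\<phi> (F \<nu>) * s \<nu>) * db" using sdn db by (simp add: mult_le_cancel_right1)
      have B2: "\<epsilon>1 * (s \<nu> * db) \<le> (\<epsilon>/2) * h"
      proof -
        have "s \<nu> * db \<le> S * (L*h)" using sdn db by (intro mult_mono) auto
        hence "\<epsilon>1 * (s \<nu> * db) \<le> \<epsilon>1 * (S * (L*h))" using e1 by (intro mult_left_mono) auto
        also have "\<dots> = (\<epsilon>1 * (S*L)) * h" by (simp add: algebra_simps)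
        also have "\<dots> \<le> (\<epsilon>/2) * h" using e2 h0 by (intro mult_right_mono) auto
        finally show ?thesis .
      qed
      have B3: "(d\<phi> (F \<nu>) - \<epsilon>1) * (C*h^2) \<le> (\<epsilon>/2) * h"
      proof -
        have "d\<phi> (F \<nu>) - \<epsilon>1 \<le> M\<phi>" using Mphi Fn e1 by force
        hence "(d\<phi> (F \<nu>) - \<epsilon>1) * (C*h^2) \<le> M\<phi> * (C*h^2)" using cst by (intro mult_right_mono) auto
        also have "\<dots> = (M\<phi>*C*h) * h" by (simp add: power2_eq_square algebra_simps)
        also have "M\<phi>*C*h \<le> M\<phi>*C*\<delta>" using h0 cst M\<phi>0 by (intro mult_left_mono) auto
        hence "(M\<phi>*C*h) * h \<le> (\<epsilon>/2) * h" using \<delta>b h0 by (intro mult_right_mono) auto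
        finally show ?thesis .
      qed
      have "(\<epsilon>/2) * h + (\<epsilon>/2) * h = \<epsilon> * h" by (simp add: field_simps)
      hence "D \<nu> \<le> D \<mu> + \<epsilon> * h" unfolding D_def using A eq B1 B2 B3 db_def by linarith
      thus "D \<nu> \<le> D \<mu> + \<epsilon> * (\<nu> - \<mu>)" unfolding h_def .
    qed
  qed
  have "D a1 \<le> D a0"
  proof (rule field_le_epsilon)
    fix e :: real assume e: "0 < e"
    have "D a1 \<le> D a0 + (e/(a1-a0))*(a1-a0)" using loc[of "e/(a1-a0)"] e a by simp
    thus "D a1 \<le> D a0 + e" using a by simp
  qed
  thus ?thesis unfolding D_def by simp
qed



lemma phi_mono:
  assumes K: "class_K r0 \<phi>" and st: "0 < s" "s \<le> t" "t < r0"
  shows "\<phi> s \<le> \<phi> t"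
proof (cases "s = t")
  case True thus ?thesis by simp
next
  case False
  hence lt: "s < t" using st by simp
  have der: "DERIV \<phi> y :> deriv \<phi> y" if "s \<le> y" "y \<le> t" for y
  proof -
    have "y \<in> {0<..<r0}" using that st by auto
    hence "\<phi> differentiable (at y)" using K unfolding class_K_def by blast
    thus ?thesis using DERIV_deriv_iff_real_differentiable by blast
  qed
  obtain z where z: "s < z" "z < t" "\<phi> t - \<phi> s = (t - s) * deriv \<phi> z"
    using MVT2[OF lt der] by blast
  have "z \<in> {0<..<r0}" using z st by auto
  hence "deriv \<phi> z > 0" using K unfolding class_K_def by blast
  hence "0 \<le> (t - s) * deriv \<phi> z" using lt by simp
  thus ?thesis using z by simp
qed


lemma vec_core:
  fixes w w' :: "'a::real_inner"
  assumes h1: "Fn + inner ((1/\<nu>) *\<^sub>R w') (w' - w) - \<alpha>/2*(norm (w'-w))^2 \<le> Fm"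
   and h2: "Fm + inner ((1/\<mu>) *\<^sub>R w) (w - w') - \<alpha>/2*(norm (w - w'))^2 \<le> Fn"
   and mn: "0<\<mu>" "\<mu><\<nu>" "\<alpha>*\<nu><1"
  shows "norm (w'-w) \<le> (\<nu>-\<mu>)*norm w/(\<mu>*(1-\<alpha>*\<nu>))"
    and "(norm w'/\<nu>)*(norm w' - norm w) - \<alpha>/2*(norm (w'-w))^2 \<le> Fm - Fn"
proof -
  define D where "D = w' - w"
  define n where "n = norm D"
  have w': "w' = w + D" unfolding D_def by simp
  have i1: "inner ((1/\<nu>) *\<^sub>R w') (w' - w) = (inner w D + n^2)/\<nu>"
    unfolding w' D_def[symmetric] n_def by (simp add: inner_add_left power2_norm_eq_inner)
  have i2: "inner ((1/\<mu>) *\<^sub>R w) (w - w') = - inner w D/\<mu>"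
    unfolding D_def by (simp add: inner_diff_right diff_divide_distrib)
  have nn: "norm (w - w') = n" unfolding n_def D_def by (simp add: norm_minus_commute)
  have "(inner w D + n^2)/\<nu> - inner w D/\<mu> - \<alpha>*n^2 \<le> 0"
  proof -
    have nn2: "norm (w' - w) = n" unfolding n_def D_def ..
    from h1 h2 have "Fn + (inner w D + n^2)/\<nu> - \<alpha>/2*n^2 \<le> Fm" "Fm + - inner w D/\<mu> - \<alpha>/2*n^2 \<le> Fn"
      unfolding i1 i2 nn nn2 by auto
    thus ?thesis by simp
  qed
  hence "n^2*(1/\<nu> - \<alpha>) \<le> inner w D * (1/\<mu> - 1/\<nu>)" by (simp add: add_divide_distrib algebra_simps)
  also have "\<dots> \<le> (norm w * n) * (1/\<mu> - 1/\<nu>)"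
  proof (rule mult_right_mono)
    show "inner w D \<le> norm w * n" unfolding n_def by (rule norm_cauchy_schwarz)
    show "0 \<le> 1/\<mu> - 1/\<nu>" using mn by (simp add: frac_le)
  qed
  finally have ineq: "n^2*(1/\<nu> - \<alpha>) \<le> (norm w * n) * (1/\<mu> - 1/\<nu>)" .
  have k1: "0 < 1/\<nu> - \<alpha>" using mn by (simp add: field_simps)
  have "n \<le> norm w * (1/\<mu> - 1/\<nu>) / (1/\<nu> - \<alpha>)"
  proof (cases "n = 0")
    case True
    have "0 \<le> norm w * (1/\<mu> - 1/\<nu>)" using mn by (simp add: frac_le)
    thus ?thesis using True k1 by simp
  next
    case False
    hence n0: "n > 0" unfolding n_def by simp
    from ineq have "n*(n*(1/\<nu> - \<alpha>)) \<le> n*(norm w * (1/\<mu> - 1/\<nu>))"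
      by (simp add: power2_eq_square algebra_simps)
    hence "n*(1/\<nu> - \<alpha>) \<le> norm w * (1/\<mu> - 1/\<nu>)" using n0 by simp
    thus ?thesis using k1 by (simp add: field_simps)
  qed
  also have "norm w * (1/\<mu> - 1/\<nu>) / (1/\<nu> - \<alpha>) = (\<nu>-\<mu>)*norm w/(\<mu>*(1-\<alpha>*\<nu>))"
    using mn by (simp add: field_simps)
  finally show "norm (w'-w) \<le> (\<nu>-\<mu>)*norm w/(\<mu>*(1-\<alpha>*\<nu>))" unfolding n_def D_def .
  have "inner ((1/\<nu>) *\<^sub>R w') (w' - w) = ((norm w')^2 - inner w' w)/\<nu>"
    by (simp add: inner_diff_right power2_norm_eq_inner diff_divide_distrib)
  also have "\<dots> \<ge> ((norm w')^2 - norm w' * norm w)/\<nu>"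
    using mn norm_cauchy_schwarz[of w' w] by (intro divide_right_mono) auto
  finally have "(norm w'/\<nu>)*(norm w' - norm w) \<le> inner ((1/\<nu>) *\<^sub>R w') (w' - w)"
    by (simp add: power2_eq_square algebra_simps diff_divide_distrib)
  thus "(norm w'/\<nu>)*(norm w' - norm w) - \<alpha>/2*(norm (w'-w))^2 \<le> Fm - Fn" using h1 by simp
qed

theorem lemma3p16:
  fixes f :: "'a::{real_inner, complete_space} \<Rightarrow> ereal"
    and \<alpha> r0 lam :: real and \<phi> :: "real \<Rightarrow> real" and x :: 'a
  assumes "\<alpha> > 0" and "semiconvex \<alpha> f"
    and "r0 > 0" and "class_K r0 \<phi>"
    and "\<forall>y. 0 < f y \<and> f y < ereal r0 \<longrightarrow> minnorm (frechet_subdiff (comp_K r0 \<phi> f) y) \<ge> 1"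
    and "0 < lam" and "lam < 1 / \<alpha>"
    and "0 < f x" and "f x < ereal r0"
    and "f (prox f lam x) > 0"
  shows "norm (prox f lam x - x)
           \<le> \<phi> (real_of_ereal (f x)) - \<phi> (real_of_ereal (f (prox f lam x)))"
proof -
  note al = assms(1) and K = assms(4) and KL = assms(5) and lam = assms(6,7)
  have proper: "proper_fun f" and lsc: "lsc_fun f"
    and conv: "ereal_convex (\<lambda>x. f x + ereal (\<alpha> / 2 * (norm x)^2))"
    using assms(2) unfolding semiconvex_def by auto
  have ninf: "\<forall>y. f y \<noteq> -\<infinity>" using proper unfolding proper_fun_def by blast
  obtain fxr where fxr: "f x = ereal fxr" using assms(8,9) by (cases "f x") auto
  have fxr0: "0 < fxr" "fxr < r0" using assms(8,9) fxr by auto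
  have lama: "lam * \<alpha> < 1" using lam al by (simp add: field_simps)
  have mua: "\<mu> * \<alpha> < 1" if "0 < \<mu>" "\<mu> \<le> lam" for \<mu>
  proof -
    have "\<mu> * \<alpha> \<le> lam * \<alpha>" using that al by (intro mult_right_mono) auto
    thus ?thesis using lama by simp
  qed
  define P where "P = (\<lambda>\<mu>. prox f \<mu> x)"
  have minP: "f (P \<mu>) + ereal ((norm (P \<mu> - x))^2/(2*\<mu>)) \<le> f z + ereal ((norm (z - x))^2/(2*\<mu>))"
    if "0 < \<mu>" "\<mu> \<le> lam" for \<mu> z
    using prox_char(1)[OF conv lsc ninf fxr _ that(1) mua[OF that]] al unfolding P_def by auto
  have finP: "\<exists>c. f (P \<mu>) = ereal c" if "0 < \<mu>" "\<mu> \<le> lam" for \<mu>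
    using prox_char(2)[OF conv lsc ninf fxr _ that(1) mua[OF that]] al unfolding P_def by auto
  define F where "F = (\<lambda>\<mu>. real_of_ereal (f (P \<mu>)))"
  have FP: "f (P \<mu>) = ereal (F \<mu>)" if "0 < \<mu>" "\<mu> \<le> lam" for \<mu>
    using finP[OF that] unfolding F_def by auto
  define b where "b = (\<lambda>\<mu>. norm (P \<mu> - x))"
  have m: "F \<mu> + (b \<mu>)^2/(2*\<mu>) \<le> F \<nu> + (b \<nu>)^2/(2*\<mu>)"
    if "0 < \<mu>" "\<mu> \<le> lam" "0 < \<nu>" "\<nu> \<le> lam" for \<mu> \<nu>
    using minP[OF that(1,2), of "P \<nu>"] FP[OF that(1,2)] FP[OF that(3,4)] unfolding b_def by simp
  have mx: "F \<mu> + (b \<mu>)^2/(2*\<mu>) \<le> fxr" if "0 < \<mu>" "\<mu> \<le> lam" for \<mu>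
    using minP[OF that, of x] FP[OF that] fxr unfolding b_def by simp
  have mono: "b \<mu> \<le> b \<nu> \<and> ((b \<nu>)^2 - (b \<mu>)^2)/(2*\<nu>) \<le> F \<mu> - F \<nu> \<and> F \<mu> - F \<nu> \<le> ((b \<nu>)^2 - (b \<mu>)^2)/(2*\<mu>)"
    if mn: "0 < \<mu>" "\<mu> < \<nu>" "\<nu> \<le> lam" for \<mu> \<nu>
  proof -
    define X where "X = (b \<nu>)^2 - (b \<mu>)^2"
    have mu': "\<mu> \<le> lam" "0 < \<nu>" using mn by auto
    have e1: "X/(2*\<mu>) = (b \<nu>)^2/(2*\<mu>) - (b \<mu>)^2/(2*\<mu>)" unfolding X_def by (rule diff_divide_distrib)
    have e2: "X/(2*\<nu>) = (b \<nu>)^2/(2*\<nu>) - (b \<mu>)^2/(2*\<nu>)" unfolding X_def by (rule diff_divide_distrib)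
    have 1: "F \<mu> - F \<nu> \<le> X/(2*\<mu>)" using m[OF mn(1) mu'(1) mu'(2) mn(3)] e1 by linarith
    have 2: "X/(2*\<nu>) \<le> F \<mu> - F \<nu>" using m[OF mu'(2) mn(3) mn(1) mu'(1)] e2 by linarith
    have X0: "0 \<le> X"
    proof (rule ccontr)
      assume "\<not> 0 \<le> X"
      hence X: "X < 0" by simp
      have "X/(2*\<mu>) < X/(2*\<nu>)" by (rule divide_strict_left_mono_neg[OF _ X]) (use mn in auto)
      thus False using 1 2 by linarith
    qed
    hence "(b \<mu>)^2 \<le> (b \<nu>)^2" unfolding X_def by simp
    hence "b \<mu> \<le> b \<nu>" by (rule power2_le_imp_le) (simp add: b_def)
    thus ?thesis using 1 2 unfolding X_def by blast
  qed
  have Flam: "0 < F lam" using assms(10) FP[of lam] lam(1) unfolding P_def by simp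
  have Fb: "F lam \<le> F \<mu> \<and> F \<mu> \<le> fxr" if "0 < \<mu>" "\<mu> \<le> lam" for \<mu>
  proof
    show "F lam \<le> F \<mu>"
    proof (cases "\<mu> = lam")
      case True thus ?thesis by simp
    next
      case False
      hence "\<mu> < lam" using that by simp
      hence "((b lam)^2 - (b \<mu>)^2)/(2*lam) \<le> F \<mu> - F lam" "b \<mu> \<le> b lam" using mono[of \<mu> lam] that by auto
      moreover have "0 \<le> ((b lam)^2 - (b \<mu>)^2)/(2*lam)"
        using \<open>b \<mu> \<le> b lam\<close> lam(1) unfolding b_def by (simp add: power_mono)
      ultimately show ?thesis by simp
    qed
    have "0 \<le> (b \<mu>)^2/(2*\<mu>)" using that by simp
    thus "F \<mu> \<le> fxr" using mx[OF that] by simp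
  qed
  define v where "v = (\<lambda>\<nu>. (1/\<nu>) *\<^sub>R (x - P \<nu>))"
  have sg: "ereal (F \<nu> + inner (v \<nu>) (z - P \<nu>) - \<alpha>/2*(norm (z - P \<nu>))^2) \<le> f z"
    if "0 < \<nu>" "\<nu> \<le> lam" for \<nu> z
    unfolding v_def by (rule semiconv_subgrad[OF conv ninf that(1) _ FP[OF that]]) (use minP[OF that] in blast)
  have dK: "deriv \<phi> t > 0" "(\<phi> has_real_derivative deriv \<phi> t) (at t)" if "0 < t" "t < r0" for t
  proof -
    have t: "t \<in> {0<..<r0}" using that by simp
    show "deriv \<phi> t > 0" using K t unfolding class_K_def by blast
    have "\<phi> differentiable (at t)" using K t unfolding class_K_def by blast
    thus "(\<phi> has_real_derivative deriv \<phi> t) (at t)" using DERIV_deriv_iff_real_differentiable by blast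
  qed
  have sd: "1 \<le> deriv \<phi> (F \<nu>) * (b \<nu> / \<nu>)" if nu: "0 < \<nu>" "\<nu> \<le> lam" for \<nu>
  proof -
    have c: "0 < F \<nu>" "F \<nu> < r0" using Fb[OF nu] Flam fxr0 by auto
    have mem: "deriv \<phi> (F \<nu>) *\<^sub>R v \<nu> \<in> frechet_subdiff (comp_K r0 \<phi> f) (P \<nu>)"
    proof (rule subdiff_mem[where K="\<alpha>/2" and c = "F \<nu>"])
      show "f (P \<nu>) = ereal (F \<nu>)" by (rule FP[OF nu])
      show "0 < F \<nu>" "F \<nu> < r0" using c by auto
      show "(\<phi> has_real_derivative deriv \<phi> (F \<nu>)) (at (F \<nu>))" by (rule dK(2)[OF c])
      show "0 < deriv \<phi> (F \<nu>)" by (rule dK(1)[OF c])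
      show "\<forall>z. ereal (F \<nu> + inner (v \<nu>) (z - P \<nu>) - \<alpha>/2*(norm (z - P \<nu>))^2) \<le> f z"
        using sg[OF nu] by blast
      show "0 \<le> \<alpha>/2" using al by simp
      show "\<phi> s \<le> \<phi> t" if "F \<nu> \<le> s" "s \<le> t" "t < r0" for s t
      proof (rule phi_mono[OF K])
        show "0 < s" using that c by simp
      qed (use that in auto)
    qed
    have "1 \<le> minnorm (frechet_subdiff (comp_K r0 \<phi> f) (P \<nu>))"
      using KL FP[OF nu] c by simp
    also have "\<dots> \<le> ereal (norm (deriv \<phi> (F \<nu>) *\<^sub>R v \<nu>))"
      unfolding minnorm_def using mem by (rule INF_lower)
    finally have "1 \<le> norm (deriv \<phi> (F \<nu>) *\<^sub>R v \<nu>)" by simp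
    also have "norm (deriv \<phi> (F \<nu>) *\<^sub>R v \<nu>) = deriv \<phi> (F \<nu>) * (b \<nu> / \<nu>)"
      unfolding v_def b_def using dK(1)[OF c] nu by (simp add: norm_minus_commute)
    finally show ?thesis .
  qed
  have main: "\<phi> (F lam) + b lam \<le> \<phi> (F \<mu>0) + b \<mu>0" if mu0: "0 < \<mu>0" "\<mu>0 < lam" for \<mu>0
  proof -
    define Bm where "Bm = b lam"
    define L where "L = Bm/(\<mu>0*(1-\<alpha>*lam))"
    define C where "C = \<alpha>/2*L^2"
    define M where "M = L*Bm/\<mu>0"
    define S where "S = Bm/\<mu>0"
    have Bm0: "0 \<le> Bm" unfolding Bm_def b_def by simp
    have al1: "0 < 1 - \<alpha>*lam" using lama by (simp add: algebra_simps)
    have L0: "0 \<le> L" unfolding L_def using Bm0 mu0 al1 by simp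
    have bB: "b \<mu> \<le> Bm" if "0 < \<mu>" "\<mu> \<le> lam" for \<mu>
      using mono[of \<mu> lam] that unfolding Bm_def by (cases "\<mu> = lam") auto
    show ?thesis
    proof (rule descent[of \<mu>0 lam "F lam" F fxr \<phi> "deriv \<phi>" "\<lambda>\<nu>. b \<nu> / \<nu>" S b C L M])
      show "\<mu>0 < lam" by fact
      show "\<And>\<mu>. \<mu>0 \<le> \<mu> \<Longrightarrow> \<mu> \<le> lam \<Longrightarrow> F lam \<le> F \<mu> \<and> F \<mu> \<le> fxr" using Fb mu0 by auto
      show "\<And>t. F lam \<le> t \<Longrightarrow> t \<le> fxr \<Longrightarrow> (\<phi> has_real_derivative deriv \<phi> t) (at t)"
        using dK(2) Flam fxr0 by auto
      show "continuous_on {F lam..fxr} (deriv \<phi>)"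
      proof (rule continuous_on_subset)
        show "continuous_on {0<..<r0} (deriv \<phi>)" using K unfolding class_K_def by blast
        show "{F lam..fxr} \<subseteq> {0<..<r0}" using Flam fxr0 by auto
      qed
      show "\<And>t. F lam \<le> t \<Longrightarrow> t \<le> fxr \<Longrightarrow> deriv \<phi> t > 0" using dK(1) Flam fxr0 by auto
      show "\<And>\<nu>. \<mu>0 \<le> \<nu> \<Longrightarrow> \<nu> \<le> lam \<Longrightarrow> 1 \<le> deriv \<phi> (F \<nu>) * (b \<nu> / \<nu>) \<and> 0 \<le> b \<nu> / \<nu> \<and> b \<nu> / \<nu> \<le> S"
      proof -
        fix \<nu> assume nu: "\<mu>0 \<le> \<nu>" "\<nu> \<le> lam"
        have nu0: "0 < \<nu>" using nu mu0 by simp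
        have "b \<nu> / \<nu> \<le> Bm / \<nu>" using bB[OF nu0 nu(2)] nu0 by (simp add: divide_right_mono)
        also have "\<dots> \<le> Bm / \<mu>0" using Bm0 nu mu0 by (simp add: frac_le)
        finally show "1 \<le> deriv \<phi> (F \<nu>) * (b \<nu> / \<nu>) \<and> 0 \<le> b \<nu> / \<nu> \<and> b \<nu> / \<nu> \<le> S"
          using sd[OF nu0 nu(2)] nu0 unfolding S_def b_def by simp
      qed
      show "C \<ge> 0" "L \<ge> 0" "M \<ge> 0" "S \<ge> 0" unfolding C_def M_def S_def using al L0 Bm0 mu0 by auto
      fix \<mu> \<nu> assume mn: "\<mu>0 \<le> \<mu>" "\<mu> < \<nu>" "\<nu> \<le> lam"
      have mu: "0 < \<mu>" "\<mu> \<le> lam" using mn mu0 by auto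
      have nu: "0 < \<nu>" "\<nu> \<le> lam" using mn mu0 by auto
      define w where "w = x - P \<mu>"
      define w' where "w' = x - P \<nu>"
      have dd: "P \<mu> - P \<nu> = w' - w" "P \<nu> - P \<mu> = w - w'" unfolding w_def w'_def by simp_all
      have h1: "F \<nu> + inner ((1/\<nu>) *\<^sub>R w') (w' - w) - \<alpha>/2*(norm (w'-w))^2 \<le> F \<mu>"
        using sg[OF nu, of "P \<mu>"] FP[OF mu] unfolding dd v_def w'_def[symmetric] by simp
      have h2: "F \<mu> + inner ((1/\<mu>) *\<^sub>R w) (w - w') - \<alpha>/2*(norm (w - w'))^2 \<le> F \<nu>"
        using sg[OF mu, of "P \<nu>"] FP[OF nu] unfolding dd v_def w_def[symmetric] by simp
      have anu: "\<alpha>*\<nu> < 1" using mua[OF nu] by (simp add: mult.commute)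
      note vc = vec_core[OF h1 h2 mu(1) mn(2) anu]
      have bw: "norm w = b \<mu>" "norm w' = b \<nu>" unfolding w_def w'_def b_def by (simp_all add: norm_minus_commute)
      have lip: "norm (w'-w) \<le> L*(\<nu>-\<mu>)"
      proof -
        have "(\<nu>-\<mu>)*norm w/(\<mu>*(1-\<alpha>*\<nu>)) \<le> (\<nu>-\<mu>)*Bm/(\<mu>0*(1-\<alpha>*lam))"
        proof (rule frac_le)
          show "0 \<le> (\<nu>-\<mu>)*Bm" using mn Bm0 by simp
          show "(\<nu>-\<mu>)*norm w \<le> (\<nu>-\<mu>)*Bm" using bB[OF mu] bw mn by (intro mult_left_mono) auto
          show "0 < \<mu>0*(1-\<alpha>*lam)" using mu0 al1 by simp
          have "1-\<alpha>*lam \<le> 1-\<alpha>*\<nu>" using nu al by (simp add: mult_left_mono)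
          thus "\<mu>0*(1-\<alpha>*lam) \<le> \<mu>*(1-\<alpha>*\<nu>)" using mn al1 mu0 by (intro mult_mono) auto
        qed
        also have "\<dots> = L*(\<nu>-\<mu>)" unfolding L_def by simp
        finally show ?thesis using vc(1) by simp
      qed
      have db: "b \<nu> - b \<mu> \<le> norm (w' - w)" using norm_triangle_ineq2[of w' w] bw by simp
      have sq: "(norm (w'-w))^2 \<le> (L*(\<nu>-\<mu>))^2" using lip by (simp add: power_mono)
      have mo: "b \<mu> \<le> b \<nu>" "((b \<nu>)^2 - (b \<mu>)^2)/(2*\<nu>) \<le> F \<mu> - F \<nu>"
          "F \<mu> - F \<nu> \<le> ((b \<nu>)^2 - (b \<mu>)^2)/(2*\<mu>)" using mono[OF mu(1) mn(2,3)] by auto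
      have "0 \<le> ((b \<nu>)^2 - (b \<mu>)^2)/(2*\<nu>)" using mo(1) nu unfolding b_def by (simp add: power_mono)
      hence F0: "0 \<le> F \<mu> - F \<nu>" using mo(2) by simp
      have FM: "F \<mu> - F \<nu> \<le> M*(\<nu>-\<mu>)"
      proof -
        have "((b \<nu>)^2 - (b \<mu>)^2)/(2*\<mu>) = (b \<nu> - b \<mu>) * (b \<nu> + b \<mu>)/(2*\<mu>)"
          by (simp add: power2_eq_square algebra_simps)
        also have "\<dots> \<le> (L*(\<nu>-\<mu>)) * (2*Bm)/(2*\<mu>0)"
        proof (rule frac_le)
          show "0 \<le> (L*(\<nu>-\<mu>)) * (2*Bm)" using L0 mn Bm0 by simp
          show "(b \<nu> - b \<mu>) * (b \<nu> + b \<mu>) \<le> (L*(\<nu>-\<mu>)) * (2*Bm)"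
            using db lip mo(1) bB[OF mu] bB[OF nu] by (intro mult_mono) (auto simp: b_def)
          show "0 < 2*\<mu>0" using mu0 by simp
          show "2*\<mu>0 \<le> 2*\<mu>" using mn by simp
        qed
        also have "\<dots> = M*(\<nu>-\<mu>)" unfolding M_def using mu0 by (simp add: field_simps)
        finally show ?thesis using mo(3) by simp
      qed
      have Fl: "b \<nu> / \<nu> * (b \<nu> - b \<mu>) - C*(\<nu>-\<mu>)^2 \<le> F \<mu> - F \<nu>"
      proof -
        have "\<alpha>/2*(norm (w'-w))^2 \<le> \<alpha>/2*(L*(\<nu>-\<mu>))^2" using sq al by (intro mult_left_mono) auto
        also have "\<dots> = C*(\<nu>-\<mu>)^2" unfolding C_def by (simp add: power_mult_distrib)
        finally show ?thesis using vc(2) bw by simp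
      qed
      show "b \<nu> / \<nu> * (b \<nu> - b \<mu>) - C*(\<nu>-\<mu>)^2 \<le> F \<mu> - F \<nu> \<and> 0 \<le> b \<nu> - b \<mu> \<and> b \<nu> - b \<mu> \<le> L*(\<nu>-\<mu>)
        \<and> 0 \<le> F \<mu> - F \<nu> \<and> F \<mu> - F \<nu> \<le> M*(\<nu>-\<mu>)"
        using Fl mo(1) db lip F0 FM by simp
    qed
  qed
  have fin: "b lam \<le> \<phi> fxr - \<phi> (F lam) + e" if e: "e > 0" for e
  proof -
    define \<mu>0 where "\<mu>0 = min (lam/2) (e^2/(2*fxr+1))"
    have mu0: "0 < \<mu>0" "\<mu>0 < lam" "\<mu>0 \<le> e^2/(2*fxr+1)" unfolding \<mu>0_def using lam e fxr0 by auto
    have mu0l: "\<mu>0 \<le> lam" using mu0 by simp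
    have "(b \<mu>0)^2 \<le> 2*\<mu>0*(fxr - F \<mu>0)"
      using mx[OF mu0(1) mu0l] mu0(1) by (simp add: field_simps)
    also have "\<dots> \<le> 2*\<mu>0*fxr" using Fb[OF mu0(1) mu0l] Flam mu0(1) by simp
    also have "\<dots> \<le> 2*(e^2/(2*fxr+1))*fxr" by (intro mult_right_mono) (use mu0 fxr0 in auto)
    also have "\<dots> < e^2"
    proof -
      have "2*fxr/(2*fxr+1) < 1" using fxr0 by simp
      hence "e^2 * (2*fxr/(2*fxr+1)) < e^2 * 1" using e by (intro mult_strict_left_mono) auto
      thus ?thesis by (simp add: field_simps)
    qed
    finally have "b \<mu>0 < e" using e unfolding b_def by (simp add: power_less_imp_less_base)
    moreover have "\<phi> (F \<mu>0) \<le> \<phi> fxr" using phi_mono[OF K _ _ fxr0(2), of "F \<mu>0"] Fb[OF mu0(1) mu0l] Flam by simp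
    ultimately show ?thesis using main[OF mu0(1,2)] by simp
  qed
  have "b lam \<le> \<phi> fxr - \<phi> (F lam)" by (rule field_le_epsilon) (use fin in simp)
  moreover have "real_of_ereal (f (prox f lam x)) = F lam" unfolding F_def P_def ..
  ultimately show ?thesis using fxr unfolding b_def P_def by simp
qed


end
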